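(* Let $X$ be a Banach space of analytic functions on $\mathbb{U}$ such that $X\hookrightarrow H_1$, and let $E$ be an order-continuous Banach sequence lattice. If $\lambda\in E$, then the multiplier operator $M_\lambda\colon X\to E$, $M_\lambda f=\{\lambda_n\hat f(n)\}$, is (well defined, bounded and) compact.
   Context: $\mathbb{U}$ is the open unit disk, $H_1$ the Hardy space on $\mathbb{U}$, $f=\sum_{n\ge0}\hat f(n)z^n$ the Taylor expansion; "$\hookrightarrow$" denotes continuous inclusion. A Banach sequence lattice on $\mathbb{Z}_+$ is a Banach space $E$ of sequences with $|y_n|\le|x_n|$ for all $n$, $x\in E$ implying $y\in E$ and $\|y\|_E\le\|x\|_E$. It is order-continuous if every nonnegative nonincreasing sequence in $E$ converging to $0$ pointwise converges to $0$ in norm. $\{e_n\}$ denotes the standard unit vectors. *)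

theory Defs
  imports "HOL-Complex_Analysis.Complex_Analysis"
begin

text \<open>A complex Banach space whose elements are complex-valued functions on a type 'a;
  two elements are identified when they agree on the set D (the domain of the functions).\<close>
definition banach_fun_space ::
  "'a set \<Rightarrow> ('a \<Rightarrow> complex) set \<Rightarrow> (('a \<Rightarrow> complex) \<Rightarrow> real) \<Rightarrow> bool" where
  "banach_fun_space D V N \<longleftrightarrow>
     (\<lambda>_. 0) \<in> V \<and>
     (\<forall>f\<in>V. \<forall>g\<in>V. (\<lambda>z. f z + g z) \<in> V) \<and>
     (\<forall>c. \<forall>f\<in>V. (\<lambda>z. c * f z) \<in> V) \<and>
     (\<forall>f\<in>V. 0 \<le> N f \<and> (N f = 0 \<longleftrightarrow> (\<forall>z\<in>D. f z = 0))) \<and>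
     (\<forall>f\<in>V. \<forall>g\<in>V. N (\<lambda>z. f z + g z) \<le> N f + N g) \<and>
     (\<forall>c. \<forall>f\<in>V. N (\<lambda>z. c * f z) = norm c * N f) \<and>
     (\<forall>s. (\<forall>k. s k \<in> V) \<and>
          (\<forall>e>0. \<exists>K. \<forall>m\<ge>K. \<forall>n\<ge>K. N (\<lambda>z. s m z - s n z) < e)
          \<longrightarrow> (\<exists>g\<in>V. (\<lambda>k. N (\<lambda>z. s k z - g z)) \<longlonglongrightarrow> 0))"

definition banach_analytic_space :: "(complex \<Rightarrow> complex) set \<Rightarrow> ((complex \<Rightarrow> complex) \<Rightarrow> real) \<Rightarrow> bool" where
  "banach_analytic_space X N \<longleftrightarrow>
     banach_fun_space (ball 0 1) X N \<and> (\<forall>f\<in>X. f holomorphic_on ball 0 1)"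

definition hardy_mean1 :: "(complex \<Rightarrow> complex) \<Rightarrow> real \<Rightarrow> real" where
  "hardy_mean1 f r = (1 / (2 * pi)) * integral {0..2*pi} (\<lambda>t. norm (f (of_real r * cis t)))"

definition hardy_norm1 :: "(complex \<Rightarrow> complex) \<Rightarrow> real" where
  "hardy_norm1 f = (SUP r\<in>{0..<1}. hardy_mean1 f r)"

definition H1 :: "(complex \<Rightarrow> complex) set" where
  "H1 = {f. f holomorphic_on ball 0 1 \<and> bdd_above (hardy_mean1 f ` {0..<1})}"

definition cont_incl_H1 :: "(complex \<Rightarrow> complex) set \<Rightarrow> ((complex \<Rightarrow> complex) \<Rightarrow> real) \<Rightarrow> bool" where
  "cont_incl_H1 X N \<longleftrightarrow> X \<subseteq> H1 \<and> (\<exists>C. \<forall>f\<in>X. hardy_norm1 f \<le> C * N f)"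

definition taylor_coeff :: "(complex \<Rightarrow> complex) \<Rightarrow> nat \<Rightarrow> complex" where
  "taylor_coeff f n = (deriv ^^ n) f 0 / of_nat (fact n)"

definition banach_seq_lattice :: "(nat \<Rightarrow> complex) set \<Rightarrow> ((nat \<Rightarrow> complex) \<Rightarrow> real) \<Rightarrow> bool" where
  "banach_seq_lattice E N \<longleftrightarrow>
     banach_fun_space UNIV E N \<and>
     (\<forall>x\<in>E. \<forall>y. (\<forall>n. norm (y n) \<le> norm (x n)) \<longrightarrow> y \<in> E \<and> N y \<le> N x)"

definition order_continuous :: "(nat \<Rightarrow> complex) set \<Rightarrow> ((nat \<Rightarrow> complex) \<Rightarrow> real) \<Rightarrow> bool" where
  "order_continuous E N \<longleftrightarrow>
     (\<forall>x :: nat \<Rightarrow> nat \<Rightarrow> complex.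
        (\<forall>k. x k \<in> E) \<and>
        (\<forall>k n. Im (x k n) = 0 \<and> 0 \<le> Re (x k n)) \<and>
        (\<forall>k n. Re (x (Suc k) n) \<le> Re (x k n)) \<and>
        (\<forall>n. (\<lambda>k. x k n) \<longlonglongrightarrow> 0)
        \<longrightarrow> (\<lambda>k. N (x k)) \<longlonglongrightarrow> 0)"

end

theory Submission
  imports Defs
begin


lemma coeff_mean:
  assumes hol: "f holomorphic_on ball 0 1" and r: "0<r" "r<1"
  shows "norm (taylor_coeff f n) * r^n \<le> hardy_mean1 f r"
proof -
  have sub: "cball 0 r \<subseteq> ball (0::complex) 1" using r by auto
  have contf: "continuous_on (cball 0 r) f"
    using holomorphic_on_imp_continuous_on[OF hol] continuous_on_subset sub by blast
  have holr: "f holomorphic_on ball 0 r"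
    using hol holomorphic_on_subset sub ball_subset_cball by blast
  define D where "D = (deriv ^^ n) f 0"
  have "((\<lambda>u. f u / (u-0) ^ Suc n) has_contour_integral (2*pi*\<i>/fact n * D)) (circlepath 0 r)"
    unfolding D_def by (rule Cauchy_has_contour_integral_higher_derivative_circlepath[OF contf holr]) (use r in auto)
  then have I: "((\<lambda>t. f (circlepath 0 r t) / (circlepath 0 r t) ^ Suc n * vector_derivative (circlepath 0 r) (at t within {0..1}))
      has_integral (2*pi*\<i>/fact n * D)) {0..1}"
    unfolding has_contour_integral_def by simp
  define h where "h t = norm (f (of_real r * cis t))" for t
  have conth: "continuous_on UNIV h"
  proof -
    have "continuous_on UNIV (\<lambda>t. of_real r * cis t)" by (intro continuous_intros)
    moreover have "(\<lambda>t. of_real r * cis t) ` UNIV \<subseteq> cball 0 r" using r by (auto simp: norm_mult)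
    ultimately show ?thesis unfolding h_def
      by (intro continuous_on_norm continuous_on_compose2[OF contf]) auto
  qed
  have hint: "(h has_integral integral {0..2*pi} h) {0..2*pi}"
    using conth by (intro integrable_integral integrable_continuous_real continuous_on_subset[OF conth]) auto
  have img: "(\<lambda>x. x / (2*pi)) ` {0..2*pi} = {0..1}"
  proof
    show "(\<lambda>x. x / (2*pi)) ` {0..2*pi} \<subseteq> {0..1}" by auto
    show "{0..1} \<subseteq> (\<lambda>x. x / (2*pi)) ` {0..2*pi}"
    proof
      fix x :: real assume "x \<in> {0..1}"
      then show "x \<in> (\<lambda>x. x / (2*pi)) ` {0..2*pi}"
        by (intro image_eqI[of _ _ "2*pi*x"]) auto
    qed
  qed
  have h2: "((\<lambda>x. h (2*pi*x)) has_integral (integral {0..2*pi} h / (2*pi))) {0..1}"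
    using has_integral_stretch_real_iff[of "2*pi" h "integral {0..2*pi} h / (2*pi)" 0 "2*pi"] hint img
    by simp
  define c where "c = 2*pi / r^n"
  have h3: "((\<lambda>x. h (2*pi*x) * c) has_integral (integral {0..2*pi} h / (2*pi)) * c) {0..1}"
    using has_integral_mult_left[OF h2] by simp
  have bound: "norm (f (circlepath 0 r t) / (circlepath 0 r t) ^ Suc n * vector_derivative (circlepath 0 r) (at t within {0..1}))
      \<le> h (2*pi*t) * c" if t: "t \<in> {0..1}" for t
  proof -
    have e: "exp (2 * of_real pi * \<i> * of_real t) = cis (2*pi*t)"
      by (simp add: cis_conv_exp mult_ac)
    have vd: "vector_derivative (circlepath 0 r) (at t within {0..1}) = 2 * pi * \<i> * r * cis (2*pi*t)"
      using vector_derivative_circlepath01[of t 0 r] t e by simp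
    have cp: "circlepath 0 r t = of_real r * cis (2*pi*t)" by (simp add: circlepath e)
    have "norm (f (circlepath 0 r t) / (circlepath 0 r t) ^ Suc n * vector_derivative (circlepath 0 r) (at t within {0..1}))
        = h (2*pi*t) / r^Suc n * (2*pi*r)"
      unfolding vd cp h_def using r by (simp add: norm_mult norm_divide norm_power)
    also have "\<dots> = h (2*pi*t) * c" using r by (simp add: c_def field_simps)
    finally show ?thesis by simp
  qed
  have "norm (2*pi*\<i>/fact n * D) \<le> integral {0..2*pi} h / (2*pi) * c"
    using integral_norm_bound_integral[OF has_integral_integrable[OF I] has_integral_integrable[OF h3] bound]
      integral_unique[OF I] integral_unique[OF h3] by simp
  moreover have "norm (2*pi*\<i>/fact n * D) = 2*pi * norm (taylor_coeff f n)"
    by (simp add: taylor_coeff_def D_def norm_mult norm_divide)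
  moreover have "hardy_mean1 f r = integral {0..2*pi} h / (2*pi)"
    by (simp add: hardy_mean1_def h_def[abs_def])
  ultimately have "2*pi*(norm (taylor_coeff f n) * r^n) \<le> 2*pi*hardy_mean1 f r"
    using r by (simp add: c_def field_simps)
  then show ?thesis using pi_gt_zero by (simp add: mult_le_cancel_left_pos)
qed


lemma fun_tendsto_coord:
  fixes F :: "nat \<Rightarrow> nat \<Rightarrow> complex"
  assumes "F \<longlonglongrightarrow> l" shows "(\<lambda>k. F k j) \<longlonglongrightarrow> l j"
proof -
  have "isCont (\<lambda>x::nat\<Rightarrow>complex. x j) l"
    using continuous_on_product_coordinates[of j] continuous_on_eq_continuous_at[OF open_UNIV] by blast
  from isCont_tendsto_compose[OF this assms] show ?thesis .
qed
lemma compact_box: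
  "compact (PiE (UNIV::nat set) (\<lambda>_. cball (0::complex) C))"
proof -
  have "compactin (product_topology (\<lambda>_. euclidean) UNIV) (PiE (UNIV::nat set) (\<lambda>_. cball (0::complex) C))"
    by (simp add: compactin_PiE compactin_euclidean_iff)
  then show ?thesis by (simp add: euclidean_product_topology compactin_euclidean_iff)
qed
lemma bounded_subseq:
  fixes a :: "nat \<Rightarrow> nat \<Rightarrow> complex"
  assumes "\<And>k n. norm (a k n) \<le> C"
  shows "\<exists>l r. strict_mono r \<and> (\<forall>n. norm (l n) \<le> C) \<and> (\<forall>n. (\<lambda>k. a (r k) n) \<longlonglongrightarrow> l n)"
proof -
  have sc: "seq_compact (PiE (UNIV::nat set) (\<lambda>_. cball (0::complex) C))"
    by (rule compact_imp_seq_compact[OF compact_box])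
  have mem: "\<forall>k. a k \<in> PiE (UNIV::nat set) (\<lambda>_. cball (0::complex) C)"
    using assms by (simp add: PiE_iff)
  obtain l r where l: "l \<in> PiE (UNIV::nat set) (\<lambda>_. cball (0::complex) C)"
    and r: "strict_mono r" and lim: "(a \<circ> r) \<longlonglongrightarrow> l"
    by (rule seq_compactE[OF sc mem])
  have "\<forall>n. (\<lambda>k. a (r k) n) \<longlonglongrightarrow> l n"
    using fun_tendsto_coord[OF lim] by (simp add: o_def)
  moreover have "\<forall>n. norm (l n) \<le> C" using l by (simp add: PiE_iff)
  ultimately show ?thesis using r by blast
qed


lemma bsl_smul:
  assumes "banach_seq_lattice E N" "x \<in> E"
  shows "(\<lambda>n. c * x n) \<in> E" "N (\<lambda>n. c * x n) = norm c * N x"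
  using assms unfolding banach_seq_lattice_def banach_fun_space_def by auto

lemma bsl_add:
  assumes "banach_seq_lattice E N" "x \<in> E" "y \<in> E"
  shows "(\<lambda>n. x n + y n) \<in> E" "N (\<lambda>n. x n + y n) \<le> N x + N y"
  using assms unfolding banach_seq_lattice_def banach_fun_space_def by auto

lemma bsl_nonneg:
  assumes "banach_seq_lattice E N" "x \<in> E"
  shows "0 \<le> N x"
  using assms unfolding banach_seq_lattice_def banach_fun_space_def by auto

lemma bsl_dom:
  assumes "banach_seq_lattice E N" "x \<in> E" "\<And>n. norm (y n) \<le> norm (x n)"
  shows "y \<in> E" "N y \<le> N x"
  using assms unfolding banach_seq_lattice_def by auto

lemma bsl_dom_scaled:
  assumes "banach_seq_lattice E N" "x \<in> E" "0 \<le> B" "\<And>n. norm (y n) \<le> B * norm (x n)"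
  shows "y \<in> E" "N y \<le> B * N x"
proof -
  have xs: "(\<lambda>n. of_real B * x n) \<in> E" "N (\<lambda>n. of_real B * x n) = B * N x"
    using bsl_smul[OF assms(1,2), of "of_real B"] assms(3) by auto
  have "\<And>n. norm (y n) \<le> norm (of_real B * x n)" using assms(3,4) by (simp add: norm_mult)
  from bsl_dom[OF assms(1) xs(1) this] xs(2) show "y \<in> E" "N y \<le> B * N x" by auto
qed

lemma bsl_zero:
  assumes "banach_seq_lattice E N"
  shows "N (\<lambda>n. 0) = 0"
  using assms unfolding banach_seq_lattice_def banach_fun_space_def by auto

lemma head_bound:
  assumes E: "banach_seq_lattice E N" and lam: "lam \<in> E"
  shows "N (\<lambda>n. if n < m then lam n * w n else 0) \<le> N lam * (\<Sum>j<m. norm (w j))"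
proof (induction m)
  case 0
  then show ?case using bsl_zero[OF E] by simp
next
  case (Suc m)
  define A where "A = (\<lambda>n. if n < m then lam n * w n else 0)"
  define B where "B = (\<lambda>n. if n = m then lam n * w n else 0)"
  define M where "M = (\<Sum>j<m. norm (w j))"
  have M0: "0 \<le> M" unfolding M_def by (simp add: sum_nonneg)
  have Ad: "norm (A n) \<le> M * norm (lam n)" for n
  proof (cases "n < m")
    case True
    have "norm (w n) \<le> M" unfolding M_def
      using True by (intro member_le_sum) auto
    then show ?thesis using True by (simp add: A_def norm_mult) (metis mult.commute mult_left_mono norm_ge_zero)
  qed (simp add: A_def M0)
  have AE: "A \<in> E" using bsl_dom_scaled(1)[OF E lam M0 Ad] .
  have Bd: "norm (B n) \<le> norm (w m) * norm (lam n)" for n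
    by (simp add: B_def norm_mult mult.commute)
  have BE: "B \<in> E" and BN: "N B \<le> norm (w m) * N lam"
    using bsl_dom_scaled[OF E lam norm_ge_zero Bd] by auto
  have eq: "(\<lambda>n. if n < Suc m then lam n * w n else 0) = (\<lambda>n. A n + B n)"
    by (auto simp: A_def B_def)
  have "N (\<lambda>n. if n < Suc m then lam n * w n else 0) \<le> N A + N B"
    unfolding eq by (rule bsl_add(2)[OF E AE BE])
  also have "\<dots> \<le> N lam * M + norm (w m) * N lam"
    using Suc.IH BN unfolding A_def M_def by simp
  also have "\<dots> = N lam * (\<Sum>j<Suc m. norm (w j))"
    by (simp add: M_def algebra_simps)
  finally show ?case .
qed



lemma coeff_bound:
  assumes "f \<in> H1" shows "norm (taylor_coeff f n) \<le> hardy_norm1 f"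
proof -
  have hol: "f holomorphic_on ball 0 1" and bdd: "bdd_above (hardy_mean1 f ` {0..<1})"
    using assms by (auto simp: H1_def)
  have le: "norm (taylor_coeff f n) * r^n \<le> hardy_norm1 f" if "0<r" "r<1" for r
  proof -
    have "norm (taylor_coeff f n) * r^n \<le> hardy_mean1 f r" by (rule coeff_mean[OF hol that])
    also have "\<dots> \<le> hardy_norm1 f" unfolding hardy_norm1_def
      using that by (intro cSUP_upper bdd) auto
    finally show ?thesis .
  qed
  have lim: "((\<lambda>r. norm (taylor_coeff f n) * r^n) \<longlongrightarrow> norm (taylor_coeff f n) * 1^n) (at_left (1::real))"
    by (intro tendsto_intros)
  have ev: "eventually (\<lambda>r. norm (taylor_coeff f n) * r^n \<le> hardy_norm1 f) (at_left (1::real))"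
  proof -
    have "eventually (\<lambda>r. r \<in> {0<..<1}) (at_left (1::real))"
      by (rule eventually_at_left_real) simp
    then show ?thesis by eventually_elim (auto intro: le)
  qed
  from tendsto_upperbound[OF lim ev] show ?thesis by simp
qed

lemma tail_lim:
  assumes E: "banach_seq_lattice E N" and oc: "order_continuous E N" and lam: "lam \<in> E"
  shows "(\<lambda>m. N (\<lambda>n. if m \<le> n then of_real (norm (lam n)) else 0)) \<longlonglongrightarrow> 0"
proof -
  define x where "x = (\<lambda>m n. if m \<le> n then complex_of_real (norm (lam n)) else 0)"
  have "\<forall>k. x k \<in> E" unfolding x_def by (auto intro!: bsl_dom(1)[OF E lam])
  moreover have "\<forall>k n. Im (x k n) = 0 \<and> 0 \<le> Re (x k n)" by (simp add: x_def)
  moreover have "\<forall>k n. Re (x (Suc k) n) \<le> Re (x k n)" by (simp add: x_def)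
  moreover have "\<forall>n. (\<lambda>k. x k n) \<longlonglongrightarrow> 0"
  proof
    fix n
    have "eventually (\<lambda>k. x k n = 0) sequentially"
      unfolding eventually_sequentially by (intro exI[of _ "Suc n"]) (auto simp: x_def)
    then show "(\<lambda>k. x k n) \<longlonglongrightarrow> 0" by (rule tendsto_eventually)
  qed
  ultimately have "(\<lambda>k. N (x k)) \<longlonglongrightarrow> 0" using oc unfolding order_continuous_def by blast
  then show ?thesis by (simp add: x_def)
qed



lemma nm_le: "norm a \<le> c \<Longrightarrow> norm (b * a) \<le> c * norm (b::complex)"
  by (simp add: norm_mult) (metis mult.commute mult_left_mono norm_ge_zero)

theorem proposition2p1:
  fixes X :: "(complex \<Rightarrow> complex) set" and NX :: "(complex \<Rightarrow> complex) \<Rightarrow> real"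
    and E :: "(nat \<Rightarrow> complex) set" and NE :: "(nat \<Rightarrow> complex) \<Rightarrow> real"
    and lam :: "nat \<Rightarrow> complex"
  assumes "banach_analytic_space X NX"
    and "cont_incl_H1 X NX"
    and "banach_seq_lattice E NE"
    and "order_continuous E NE"
    and "lam \<in> E"
  shows "(\<forall>f\<in>X. (\<lambda>n. lam n * taylor_coeff f n) \<in> E)
       \<and> (\<exists>C. \<forall>f\<in>X. NE (\<lambda>n. lam n * taylor_coeff f n) \<le> C * NX f)
       \<and> (\<forall>s :: nat \<Rightarrow> complex \<Rightarrow> complex. (\<forall>k. s k \<in> X \<and> NX (s k) \<le> 1) \<longrightarrow>
            (\<exists>r g. strict_mono r \<and> g \<in> E \<and>
               (\<lambda>k. NE (\<lambda>n. lam n * taylor_coeff (s (r k)) n - g n)) \<longlonglongrightarrow> 0))"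
proof -
  note E = assms(3) and lam = assms(5)
  have NX0: "0 \<le> NX f" if "f \<in> X" for f
    using assms(1) that unfolding banach_analytic_space_def banach_fun_space_def by auto
  obtain C0 where XH: "X \<subseteq> H1" and C0: "\<forall>f\<in>X. hardy_norm1 f \<le> C0 * NX f"
    using assms(2) unfolding cont_incl_H1_def by blast
  define C where "C = max C0 0"
  have C0': "0 \<le> C" by (simp add: C_def)
  have cb: "norm (taylor_coeff f n) \<le> C * NX f" if f: "f \<in> X" for f n
  proof -
    have "norm (taylor_coeff f n) \<le> hardy_norm1 f" using coeff_bound XH f by blast
    also have "\<dots> \<le> C0 * NX f" using C0 f by blast
    also have "\<dots> \<le> C * NX f" unfolding C_def by (intro mult_right_mono NX0 f) simp
    finally show ?thesis .
  qed
  have P12: "(\<lambda>n. lam n * taylor_coeff f n) \<in> E \<and> NE (\<lambda>n. lam n * taylor_coeff f n) \<le> (C * NE lam) * NX f"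
    if f: "f \<in> X" for f
  proof -
    have B0: "0 \<le> C * NX f" using C0' NX0[OF f] by simp
    have "norm (lam n * taylor_coeff f n) \<le> (C * NX f) * norm (lam n)" for n
      using cb[OF f, of n] by (rule nm_le)
    from bsl_dom_scaled[OF E lam B0 this] show ?thesis by (simp add: algebra_simps)
  qed
  have P3: "\<exists>r g. strict_mono r \<and> g \<in> E \<and>
               (\<lambda>k. NE (\<lambda>n. lam n * taylor_coeff (s (r k)) n - g n)) \<longlonglongrightarrow> 0"
    if s: "\<forall>k. s k \<in> X \<and> NX (s k) \<le> 1" for s :: "nat \<Rightarrow> complex \<Rightarrow> complex"
  proof -
    have bd: "norm (taylor_coeff (s k) n) \<le> C" for k n
    proof -
      have "norm (taylor_coeff (s k) n) \<le> C * NX (s k)" using cb s by blast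
      also have "\<dots> \<le> C * 1" using s C0' by (intro mult_left_mono) auto
      finally show ?thesis by simp
    qed
    obtain l r where r: "strict_mono r" and lC: "\<forall>n. norm (l n) \<le> C"
      and lim: "\<forall>n. (\<lambda>k. taylor_coeff (s (r k)) n) \<longlonglongrightarrow> l n"
      using bounded_subseq[of "\<lambda>k n. taylor_coeff (s k) n" C] bd by blast
    define g where "g = (\<lambda>n. lam n * l n)"
    have "norm (g n) \<le> C * norm (lam n)" for n unfolding g_def using nm_le lC by blast
    then have gE: "g \<in> E" using bsl_dom_scaled(1)[OF E lam C0'] by blast
    define b where "b = (\<lambda>k n. taylor_coeff (s (r k)) n)"
    define d where "d = (\<lambda>k n. lam n * b k n - g n)"
    define T where "T = (\<lambda>m n. if m \<le> n then complex_of_real (norm (lam n)) else 0)"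
    have C2: "0 \<le> 2 * C" using C0' by simp
    have bl: "norm (b k n - l n) \<le> 2 * C" for k n
    proof -
      have "norm (b k n - l n) \<le> norm (b k n) + norm (l n)" by (rule norm_triangle_ineq4)
      also have "\<dots> \<le> C + C" using bd lC unfolding b_def by (intro add_mono) auto
      finally show ?thesis by simp
    qed
    have dl: "d k n = lam n * (b k n - l n)" for k n by (simp add: d_def g_def algebra_simps)
    have dE: "d k \<in> E" for k
    proof -
      have "norm (d k n) \<le> 2 * C * norm (lam n)" for n unfolding dl using nm_le bl by blast
      then show ?thesis using bsl_dom_scaled(1)[OF E lam C2] by blast
    qed
    have TE: "T m \<in> E" for m
      by (rule bsl_dom(1)[OF E lam]) (simp add: T_def)
    have key: "NE (d k) \<le> NE lam * (\<Sum>j<m. norm (b k j - l j)) + 2 * C * NE (T m)" for k m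
    proof -
      define H where "H = (\<lambda>n. if n < m then lam n * (b k n - l n) else 0)"
      define Tl where "Tl = (\<lambda>n. if m \<le> n then d k n else 0)"
      have Hd: "norm (H n) \<le> 2 * C * norm (lam n)" for n
        using nm_le[OF bl[of k n], of "lam n"] C2 by (simp add: H_def)
      have HE: "H \<in> E" using bsl_dom_scaled(1)[OF E lam C2 Hd] .
      have Tld: "norm (Tl n) \<le> 2 * C * norm (T m n)" for n
        using nm_le[OF bl[of k n], of "lam n"] C2 by (simp add: Tl_def T_def dl)
      have TlE: "Tl \<in> E" and TlN: "NE Tl \<le> 2 * C * NE (T m)"
        using bsl_dom_scaled[OF E TE C2 Tld] by auto
      have eq: "d k = (\<lambda>n. H n + Tl n)" by (auto simp: H_def Tl_def dl)
      have "NE (d k) \<le> NE H + NE Tl" unfolding eq by (rule bsl_add(2)[OF E HE TlE])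
      moreover have "NE H \<le> NE lam * (\<Sum>j<m. norm (b k j - l j))"
        unfolding H_def by (rule head_bound[OF E lam])
      ultimately show ?thesis using TlN by linarith
    qed
    have "(\<lambda>k. NE (d k)) \<longlonglongrightarrow> 0"
    proof (rule LIMSEQ_I)
      fix e :: real assume e: "0 < e"
      have "(\<lambda>m. 2 * C * NE (T m)) \<longlonglongrightarrow> 0"
        using tail_lim[OF E assms(4) lam] unfolding T_def by (intro tendsto_mult_right_zero)
      from LIMSEQ_D[OF this, of "e/2"] e obtain m where m: "norm (2 * C * NE (T m)) < e/2" by auto
      have "(\<lambda>k. NE lam * (\<Sum>j<m. norm (b k j - l j))) \<longlonglongrightarrow> 0"
      proof (intro tendsto_mult_right_zero tendsto_null_sum)
        fix j assume "j \<in> {..<m}"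
        have "(\<lambda>k. b k j) \<longlonglongrightarrow> l j" using lim unfolding b_def by blast
        then show "(\<lambda>k. norm (b k j - l j)) \<longlonglongrightarrow> 0"
          by (intro tendsto_norm_zero LIM_zero)
      qed
      from LIMSEQ_D[OF this, of "e/2"] e obtain K where
        K: "\<forall>k\<ge>K. norm (NE lam * (\<Sum>j<m. norm (b k j - l j))) < e/2" by auto
      show "\<exists>no. \<forall>k\<ge>no. norm (NE (d k) - 0) < e"
      proof (intro exI allI impI)
        fix k assume "K \<le> k"
        with K have h: "NE lam * (\<Sum>j<m. norm (b k j - l j)) < e/2" by auto
        have "0 \<le> NE (d k)" by (rule bsl_nonneg[OF E dE])
        moreover have "2 * C * NE (T m) < e/2" using m by auto
        ultimately show "norm (NE (d k) - 0) < e" using key[of k m] h by simp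
      qed
    qed
    then show ?thesis using r gE unfolding d_def b_def by blast
  qed
  show ?thesis using P12 P3 by blast
qed

end
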